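(* Let $n\ge 1$, let $Q$ be an $n$-state 1gQFA over a finite alphabet $\Sigma$, and let $\lambda\in[0,1)$. Then there exist a one-way PFA $P$ over $\Sigma$ with at most $2n^2+6$ states and a strict cutpoint $\mu\in[0,1)$ such that $L(P,\mu)=L(Q,\lambda)$. In particular, the cost of strict-cutpoint simulation of $n$-state 1gQFA by PFA is $O(n^2)$ states.
   Context: Let $\Sigma$ be a finite alphabet and $\Sigma^\ast$ the set of finite words over it. Probabilistic computations are written with row vectors; stochastic matrices act on the right. A one-way PFA (probabilistic finite automaton, end-marker model) over $\Sigma$ is a tuple $P=(S,\Sigma,\pi,\{P_\sigma\}_{\sigma\in\Sigma},P_{\#},F)$, where $S$ is a finite state set (its number of states is $|S|$), $\pi$ is an initial probability distribution (row vector) on $S$, each $P_\sigma$ and $P_\#$ are row-stochastic $|S|\times|S|$ matrices, and $F\subseteq S$. For $w=\sigma_1\cdots\sigma_m$, $f_P(w)=\pi P_{\sigma_1}\cdots P_{\sigma_m}P_\#\mathbf 1_F$, where $\mathbf 1_F$ is the indicator column vector of $F$. For $\mu\in[0,1)$, $L(P,\mu)=\{w\in\Sigma^\ast: f_P(w)>\mu\}$. An $n$-state 1gQFA (measure-once one-way general quantum finite automaton) over $\Sigma$ is a tuple $Q=(\mathcal H,\Sigma,\rho_0,\{\mathcal E_\sigma\}_{\sigma\in\Sigma},P_{\mathrm{acc}})$ where $\mathcal H\cong\mathbb C^n$, $\rho_0$ is a density operator on $\mathcal H$, each $\mathcal E_\sigma$ is a completely positive trace-preserving map on the operators on $\mathcal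 H$, and $P_{\mathrm{acc}}$ is an orthogonal projector on $\mathcal H$. For $w=\sigma_1\cdots\sigma_m$, $\rho_w=\mathcal E_{\sigma_m}\circ\cdots\circ\mathcal E_{\sigma_1}(\rho_0)$ and $f_Q(w)=\operatorname{Tr}(P_{\mathrm{acc}}\rho_w)$. For $\lambda\in[0,1)$, $L(Q,\lambda)=\{w\in\Sigma^\ast: f_Q(w)>\lambda\}$. *)

theory Defs
  imports Complex_Main "Jordan_Normal_Form.Matrix"
begin

definition mtrace :: "'b::comm_ring_1 mat \<Rightarrow> 'b" where
  "mtrace M = (\<Sum>i<dim_row M. M $$ (i, i))"

definition adj :: "complex mat \<Rightarrow> complex mat" where
  "adj M = mat (dim_col M) (dim_row M) (\<lambda>(i, j). cnj (M $$ (j, i)))"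

definition psd :: "nat \<Rightarrow> complex mat \<Rightarrow> bool" where
  "psd n M \<longleftrightarrow> M \<in> carrier_mat n n \<and> adj M = M \<and>
     (\<forall>v \<in> carrier_vec n. 0 \<le> Re ((M *\<^sub>v v) \<bullet>c v))"

definition density_op :: "nat \<Rightarrow> complex mat \<Rightarrow> bool" where
  "density_op n \<rho> \<longleftrightarrow> psd n \<rho> \<and> mtrace \<rho> = 1"

definition orth_projector :: "nat \<Rightarrow> complex mat \<Rightarrow> bool" where
  "orth_projector n P \<longleftrightarrow> P \<in> carrier_mat n n \<and> P * P = P \<and> adj P = P"

(* (id_k \<otimes> E) applied to a (k n) x (k n) matrix viewed as k x k blocks of n x n matrices *)
definition ampl :: "nat \<Rightarrow> nat \<Rightarrow> (complex mat \<Rightarrow> complex mat) \<Rightarrow> complex mat \<Rightarrow> complex mat" where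
  "ampl k n E M = mat (k * n) (k * n) (\<lambda>(i, j).
      E (mat n n (\<lambda>(p, q). M $$ ((i div n) * n + p, (j div n) * n + q))) $$ (i mod n, j mod n))"

definition linear_map_on :: "nat \<Rightarrow> (complex mat \<Rightarrow> complex mat) \<Rightarrow> bool" where
  "linear_map_on n E \<longleftrightarrow>
     (\<forall>A \<in> carrier_mat n n. E A \<in> carrier_mat n n) \<and>
     (\<forall>A \<in> carrier_mat n n. \<forall>B \<in> carrier_mat n n. E (A + B) = E A + E B) \<and>
     (\<forall>A \<in> carrier_mat n n. \<forall>c. E (c \<cdot>\<^sub>m A) = c \<cdot>\<^sub>m E A)"

definition completely_positive :: "nat \<Rightarrow> (complex mat \<Rightarrow> complex mat) \<Rightarrow> bool" where
  "completely_positive n E \<longleftrightarrow>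
     (\<forall>k. \<forall>M. psd (k * n) M \<longrightarrow> psd (k * n) (ampl k n E M))"

definition trace_preserving :: "nat \<Rightarrow> (complex mat \<Rightarrow> complex mat) \<Rightarrow> bool" where
  "trace_preserving n E \<longleftrightarrow> (\<forall>A \<in> carrier_mat n n. mtrace (E A) = mtrace A)"

definition cptp :: "nat \<Rightarrow> (complex mat \<Rightarrow> complex mat) \<Rightarrow> bool" where
  "cptp n E \<longleftrightarrow> linear_map_on n E \<and> completely_positive n E \<and> trace_preserving n E"

definition gqfa :: "nat \<Rightarrow> complex mat \<Rightarrow> ('a \<Rightarrow> complex mat \<Rightarrow> complex mat) \<Rightarrow> complex mat \<Rightarrow> bool" where
  "gqfa n \<rho>0 E Pacc \<longleftrightarrow> density_op n \<rho>0 \<and> (\<forall>\<sigma>. cptp n (E \<sigma>)) \<and> orth_projector n Pacc"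

definition gqfa_state :: "complex mat \<Rightarrow> ('a \<Rightarrow> complex mat \<Rightarrow> complex mat) \<Rightarrow> 'a list \<Rightarrow> complex mat" where
  "gqfa_state \<rho>0 E w = foldl (\<lambda>\<rho> \<sigma>. E \<sigma> \<rho>) \<rho>0 w"

definition gqfa_prob :: "complex mat \<Rightarrow> ('a \<Rightarrow> complex mat \<Rightarrow> complex mat) \<Rightarrow> complex mat \<Rightarrow> 'a list \<Rightarrow> real" where
  "gqfa_prob \<rho>0 E Pacc w = Re (mtrace (Pacc * gqfa_state \<rho>0 E w))"

definition gqfa_lang :: "complex mat \<Rightarrow> ('a \<Rightarrow> complex mat \<Rightarrow> complex mat) \<Rightarrow> complex mat \<Rightarrow> real \<Rightarrow> 'a list set" where
  "gqfa_lang \<rho>0 E Pacc lam = {w. gqfa_prob \<rho>0 E Pacc w > lam}"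

definition stochastic_vec :: "nat \<Rightarrow> real vec \<Rightarrow> bool" where
  "stochastic_vec m v \<longleftrightarrow> v \<in> carrier_vec m \<and> (\<forall>i<m. 0 \<le> v $ i) \<and> (\<Sum>i<m. v $ i) = 1"

definition stochastic_mat :: "nat \<Rightarrow> real mat \<Rightarrow> bool" where
  "stochastic_mat m A \<longleftrightarrow> A \<in> carrier_mat m m \<and> (\<forall>i<m. \<forall>j<m. 0 \<le> A $$ (i, j)) \<and>
     (\<forall>i<m. (\<Sum>j<m. A $$ (i, j)) = 1)"

definition pfa :: "nat \<Rightarrow> real vec \<Rightarrow> ('a \<Rightarrow> real mat) \<Rightarrow> real mat \<Rightarrow> nat set \<Rightarrow> bool" where
  "pfa m \<pi> P Pend F \<longleftrightarrow> stochastic_vec m \<pi> \<and> (\<forall>\<sigma>. stochastic_mat m (P \<sigma>)) \<and>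
     stochastic_mat m Pend \<and> F \<subseteq> {..<m}"

definition row_mult :: "real vec \<Rightarrow> real mat \<Rightarrow> real vec" where
  "row_mult v A = vec (dim_col A) (\<lambda>j. \<Sum>i<dim_vec v. v $ i * A $$ (i, j))"

definition pfa_prob :: "real vec \<Rightarrow> ('a \<Rightarrow> real mat) \<Rightarrow> real mat \<Rightarrow> nat set \<Rightarrow> 'a list \<Rightarrow> real" where
  "pfa_prob \<pi> P Pend F w =
     (let v = row_mult (foldl (\<lambda>u \<sigma>. row_mult u (P \<sigma>)) \<pi> w) Pend
      in \<Sum>i\<in>F. v $ i)"

definition pfa_lang :: "real vec \<Rightarrow> ('a \<Rightarrow> real mat) \<Rightarrow> real mat \<Rightarrow> nat set \<Rightarrow> real \<Rightarrow> 'a list set" where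
  "pfa_lang \<pi> P Pend F \<mu> = {w. pfa_prob \<pi> P Pend F w > \<mu>}"

end

theory Submission
  imports Defs
begin


definition rsum :: "(nat \<Rightarrow> nat \<Rightarrow> real) \<Rightarrow> nat \<Rightarrow> nat \<Rightarrow> real" where
  "rsum A d i = (\<Sum>j<d. A i j)"
definition csum :: "(nat \<Rightarrow> nat \<Rightarrow> real) \<Rightarrow> nat \<Rightarrow> nat \<Rightarrow> real" where
  "csum A d j = (\<Sum>i<d. A i j)"
definition Bm :: "(nat \<Rightarrow> nat \<Rightarrow> real) \<Rightarrow> nat \<Rightarrow> nat \<Rightarrow> nat \<Rightarrow> real" where
  "Bm A d i j = (if i < d then (if j < d then A i j else if j = d then - rsum A d i else 0)
     else if i = d then 0
     else (if j < d then - csum A d j else if j = d then (\<Sum>k<d. rsum A d k) else 0))"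
definition yv :: "nat \<Rightarrow> (nat \<Rightarrow> real) \<Rightarrow> nat \<Rightarrow> real" where
  "yv d x i = (if i < d then x i else if i = d then - (\<Sum>k<d. x k) else 0)"
definition stp :: "(nat \<Rightarrow> nat \<Rightarrow> real) \<Rightarrow> nat \<Rightarrow> (nat \<Rightarrow> real) \<Rightarrow> nat \<Rightarrow> real" where
  "stp A d x = (\<lambda>j. \<Sum>i<d. x i * A i j)"

lemma sumN: "(\<Sum>i<Suc (Suc d). f i) = (\<Sum>i<d. f i) + f d + f (Suc d)"
  by simp

lemma sum_lt: "(\<Sum>i<d. if i < d then f i else g i) = (\<Sum>i<d. f i)"
  by (rule sum.cong) auto

lemma rsum_csum: "(\<Sum>j<d. csum A d j) = (\<Sum>k<d. rsum A d k)"
  unfolding rsum_def csum_def by (rule sum.swap)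

lemma Bm_col: "(\<Sum>i<Suc (Suc d). Bm A d i j) = 0"
proof -
  have "(\<Sum>i<d. Bm A d i j) = (\<Sum>i<d. if j < d then A i j else if j = d then - rsum A d i else 0)"
    by (rule sum.cong) (auto simp: Bm_def)
  then show ?thesis unfolding sumN
    by (auto simp: Bm_def csum_def sum_negf)
qed

lemma Bm_row: "(\<Sum>j<Suc (Suc d). Bm A d i j) = 0"
proof -
  have "(\<Sum>j<d. Bm A d i j) = (if i < d then rsum A d i else if i = d then 0 else - (\<Sum>j<d. csum A d j))"
    by (auto simp: Bm_def rsum_def sum_negf intro!: sum.cong)
  then show ?thesis unfolding sumN rsum_csum
    by (auto simp: Bm_def)
qed

lemma yv_sum: "(\<Sum>i<Suc (Suc d). yv d x i) = 0"
  unfolding sumN by (simp add: yv_def sum_lt)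

lemma yv_B: "(\<Sum>i<Suc (Suc d). yv d x i * Bm A d i j) = yv d (stp A d x) j"
proof -
  have "(\<Sum>i<d. yv d x i * Bm A d i j) = (\<Sum>i<d. x i * (if j < d then A i j else if j = d then - rsum A d i else 0))"
    by (rule sum.cong) (auto simp: Bm_def yv_def)
  also have "\<dots> = (if j < d then stp A d x j else if j = d then - (\<Sum>k<d. stp A d x k) else 0)"
  proof -
    have "(\<Sum>i<d. x i * rsum A d i) = (\<Sum>k<d. stp A d x k)"
      unfolding rsum_def stp_def sum_distrib_left by (rule sum.swap)
    then show ?thesis by (auto simp: stp_def sum_negf)
  qed
  finally show ?thesis unfolding sumN by (auto simp: yv_def Bm_def)
qed

definition Kc :: "(nat \<Rightarrow> nat \<Rightarrow> real) \<Rightarrow> nat \<Rightarrow> real" where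
  "Kc A d = 1 + (\<Sum>i<Suc (Suc d). \<Sum>j<Suc (Suc d). \<bar>Bm A d i j\<bar>)"
definition Pm :: "(nat \<Rightarrow> nat \<Rightarrow> real) \<Rightarrow> nat \<Rightarrow> real mat" where
  "Pm A d = mat (Suc (Suc d)) (Suc (Suc d)) (\<lambda>(i,j). (Bm A d i j + Kc A d) / (real (Suc (Suc d)) * Kc A d))"

lemma Bm_le: assumes "i < Suc (Suc d)" "j < Suc (Suc d)" shows "\<bar>Bm A d i j\<bar> \<le> Kc A d - 1"
proof -
  have "\<bar>Bm A d i j\<bar> \<le> (\<Sum>j<Suc (Suc d). \<bar>Bm A d i j\<bar>)"
    by (rule member_le_sum) (use assms in auto)
  also have "\<dots> \<le> (\<Sum>i<Suc (Suc d). \<Sum>j<Suc (Suc d). \<bar>Bm A d i j\<bar>)"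
    by (rule member_le_sum[where f = "\<lambda>i. \<Sum>j<Suc (Suc d). \<bar>Bm A d i j\<bar>"]) (use assms in \<open>auto intro: sum_nonneg\<close>)
  finally show ?thesis by (simp add: Kc_def)
qed

lemma Kc_pos: "Kc A d \<ge> 1"
proof -
  have "0 \<le> (\<Sum>i<Suc (Suc d). \<Sum>j<Suc (Suc d). \<bar>Bm A d i j\<bar>)"
    by (intro sum_nonneg) auto
  then show ?thesis unfolding Kc_def by linarith
qed

lemma Pm_stoch: "stochastic_mat (Suc (Suc d)) (Pm A d)"
proof -
  have K: "Kc A d \<ge> 1" by (rule Kc_pos)
  have nn: "0 \<le> Pm A d $$ (i, j)" if "i < Suc (Suc d)" "j < Suc (Suc d)" for i j
  proof -
    have "\<bar>Bm A d i j\<bar> \<le> Kc A d - 1" using Bm_le that by blast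
    then have "0 \<le> Bm A d i j + Kc A d" by linarith
    then show ?thesis using that K by (simp add: Pm_def)
  qed
  have rs: "(\<Sum>j<Suc (Suc d). Pm A d $$ (i, j)) = 1" if "i < Suc (Suc d)" for i
  proof -
    have "(\<Sum>j<Suc (Suc d). Pm A d $$ (i, j)) = (\<Sum>j<Suc (Suc d). (Bm A d i j + Kc A d) / (real (Suc (Suc d)) * Kc A d))"
      by (rule sum.cong) (use that in \<open>auto simp: Pm_def\<close>)
    also have "\<dots> = ((\<Sum>j<Suc (Suc d). Bm A d i j) + real (Suc (Suc d)) * Kc A d) / (real (Suc (Suc d)) * Kc A d)"
      by (simp add: sum_divide_distrib[symmetric] sum.distrib)
    also have "\<dots> = 1" unfolding Bm_row using K by simp
    finally show ?thesis .
  qed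
  show ?thesis unfolding stochastic_mat_def using nn rs by (auto simp: Pm_def)
qed

lemma Pm_step:
  assumes u: "u \<in> carrier_vec (Suc (Suc d))" and c: "c > 0"
    and ui: "\<And>i. i < Suc (Suc d) \<Longrightarrow> u $ i = 1 / real (Suc (Suc d)) + c * yv d x i"
  shows "row_mult u (Pm A d) \<in> carrier_vec (Suc (Suc d)) \<and>
    (\<exists>c'>0. \<forall>j<Suc (Suc d). row_mult u (Pm A d) $ j = 1 / real (Suc (Suc d)) + c' * yv d (stp A d x) j)"
proof -
  define N where "N = real (Suc (Suc d))"
  define K where "K = Kc A d"
  have K: "K \<ge> 1" using Kc_pos K_def by simp
  have N: "N > 0" by (simp add: N_def)
  have "row_mult u (Pm A d) $ j = 1 / N + (c / (N * K)) * yv d (stp A d x) j" if j: "j < Suc (Suc d)" for j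
  proof -
    have "row_mult u (Pm A d) $ j = (\<Sum>i<Suc (Suc d). u $ i * Pm A d $$ (i, j))"
      using u j by (simp add: row_mult_def Pm_def)
    also have "\<dots> = (\<Sum>i<Suc (Suc d). (1 / N + c * yv d x i) * ((Bm A d i j + K) / (N * K)))"
      by (rule sum.cong) (use j ui in \<open>auto simp: Pm_def N_def K_def\<close>)
    also have "\<dots> = (\<Sum>i<Suc (Suc d). (1 / (N * N * K)) * Bm A d i j + 1 / (N * N)
        + (c / (N * K)) * (yv d x i * Bm A d i j) + (c / N) * yv d x i)"
      by (rule sum.cong) (use N K in \<open>auto simp: field_simps\<close>)
    also have "\<dots> = (1 / (N * N * K)) * (\<Sum>i<Suc (Suc d). Bm A d i j) + N * (1 / (N * N))
        + (c / (N * K)) * (\<Sum>i<Suc (Suc d). yv d x i * Bm A d i j) + (c / N) * (\<Sum>i<Suc (Suc d). yv d x i)"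
      by (simp add: sum.distrib sum_distrib_left N_def del: sum.lessThan_Suc)
    also have "\<dots> = 1 / N + (c / (N * K)) * yv d (stp A d x) j"
      unfolding Bm_col yv_B yv_sum using N by (simp add: field_simps)
    finally show ?thesis .
  qed
  moreover have "c / (N * K) > 0" using c N K by simp
  ultimately show ?thesis using u by (auto simp: row_mult_def Pm_def N_def)
qed

lemma abs_le_sum_abs: "i < (n::nat) \<Longrightarrow> \<bar>f i\<bar> \<le> (\<Sum>k<n. \<bar>f k :: real\<bar>)"
  using member_le_sum[of i "{..<n}" "\<lambda>k. \<bar>f k\<bar>"] by auto

lemma turakainen:
  fixes A :: "'a \<Rightarrow> nat \<Rightarrow> nat \<Rightarrow> real" and x0 \<beta> :: "nat \<Rightarrow> real" and d :: nat
  shows "\<exists>\<pi> (P::'a \<Rightarrow> real mat) Pend F \<mu>. pfa (Suc (Suc d)) \<pi> P Pend F \<and> 0 \<le> \<mu> \<and> \<mu> < 1 \<and>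
     (\<forall>w. (pfa_prob \<pi> P Pend F w > \<mu>) \<longleftrightarrow> (\<Sum>i<d. foldl (\<lambda>x \<sigma>. stp (A \<sigma>) d x) x0 w i * \<beta> i) > 0)"
proof -
  define N where "N = Suc (Suc d)"
  define Nr where "Nr = real N"
  have Nr: "Nr > 0" by (simp add: Nr_def N_def)
  define y0 where "y0 = yv d x0"
  define S0 where "S0 = (\<Sum>i<N. \<bar>y0 i\<bar>)"
  have S0: "S0 \<ge> 0" unfolding S0_def by (intro sum_nonneg) auto
  define \<epsilon> where "\<epsilon> = 1 / (Nr * (1 + S0))"
  have eps: "\<epsilon> > 0" using Nr S0 by (simp add: \<epsilon>_def)
  define \<pi> where "\<pi> = vec N (\<lambda>i. 1 / Nr + \<epsilon> * y0 i)"
  define P where "P = (\<lambda>\<sigma>. Pm (A \<sigma>) d)"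
  define Sb where "Sb = (\<Sum>i<d. \<bar>\<beta> i\<bar>)"
  have Sb: "Sb \<ge> 0" unfolding Sb_def by (intro sum_nonneg) auto
  define \<delta> where "\<delta> = 1 / (2 * (1 + Sb))"
  have dl: "\<delta> > 0" using Sb by (simp add: \<delta>_def)
  define h where "h = (\<lambda>i. if i < d then 1/2 + \<delta> * \<beta> i else 1/2 :: real)"
  have h: "0 \<le> h i \<and> h i < 1" for i
  proof (cases "i < d")
    case True
    have "\<bar>\<beta> i\<bar> \<le> Sb" unfolding Sb_def by (rule abs_le_sum_abs[OF True])
    then have "\<bar>\<delta> * \<beta> i\<bar> < 1/2" using Sb by (simp add: \<delta>_def abs_mult field_simps)
    then show ?thesis using True by (auto simp: h_def)
  qed (auto simp: h_def)
  define Pend where "Pend = mat N N (\<lambda>(i,j). if j = 0 then h i else if j = 1 then 1 - h i else 0)"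
  define \<mu> where "\<mu> = (1 / Nr) * (\<Sum>i<N. h i)"
  define xs where "xs = (\<lambda>w. foldl (\<lambda>x \<sigma>. stp (A \<sigma>) d x) x0 w)"
  define us where "us = (\<lambda>w. foldl (\<lambda>u \<sigma>. row_mult u (P \<sigma>)) \<pi> w)"
  have inv: "us w \<in> carrier_vec N \<and> (\<exists>c>0. \<forall>i<N. us w $ i = 1 / Nr + c * yv d (xs w) i)" for w
  proof (induction w rule: rev_induct)
    case Nil
    show ?case using eps by (auto simp: us_def xs_def \<pi>_def y0_def)
  next
    case (snoc \<sigma> w)
    then obtain c where c: "c > 0" "\<forall>i<N. us w $ i = 1 / Nr + c * yv d (xs w) i" and u: "us w \<in> carrier_vec N"
      by blast
    have "us (w @ [\<sigma>]) = row_mult (us w) (Pm (A \<sigma>) d)" by (simp add: us_def P_def)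
    moreover have "xs (w @ [\<sigma>]) = stp (A \<sigma>) d (xs w)" by (simp add: xs_def)
    ultimately show ?case using Pm_step[of "us w" d c "xs w" "A \<sigma>"] c u
      by (simp add: N_def Nr_def)
  qed
  have pfa: "pfa N \<pi> P Pend {0}"
  proof -
    have "stochastic_vec N \<pi>"
    proof -
      have "0 \<le> 1 / Nr + \<epsilon> * y0 i" if "i < N" for i
      proof -
        have "\<bar>y0 i\<bar> \<le> S0" unfolding S0_def by (rule abs_le_sum_abs[OF that])
        then have "\<bar>y0 i\<bar> \<le> 1 + S0" by linarith
        then have le: "\<bar>y0 i\<bar> / ((1 + S0) * Nr) \<le> (1 + S0) / ((1 + S0) * Nr)"
          using Nr S0 by (intro divide_right_mono) simp_all
        have "\<epsilon> * \<bar>y0 i\<bar> = \<bar>y0 i\<bar> / ((1 + S0) * Nr)" by (simp add: \<epsilon>_def)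
        also note le
        also have "(1 + S0) / ((1 + S0) * Nr) = 1 / Nr" using S0 by simp
        finally have A: "\<epsilon> * \<bar>y0 i\<bar> \<le> 1 / Nr" .
        have "- \<bar>y0 i\<bar> \<le> y0 i" by (cases "y0 i \<ge> 0") auto
        then have "\<epsilon> * (- \<bar>y0 i\<bar>) \<le> \<epsilon> * y0 i" using eps by (intro mult_left_mono) auto
        then have B: "- (\<epsilon> * \<bar>y0 i\<bar>) \<le> \<epsilon> * y0 i" by simp
        show ?thesis using A B by linarith
      qed
      moreover have "(\<Sum>i<N. \<pi> $ i) = 1"
      proof -
        have "(\<Sum>i<N. \<pi> $ i) = (\<Sum>i<N. 1 / Nr + \<epsilon> * y0 i)" by (simp add: \<pi>_def)
        also have "\<dots> = N * (1 / Nr) + \<epsilon> * (\<Sum>i<N. y0 i)"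
          by (simp add: sum.distrib sum_distrib_left del: sum.lessThan_Suc)
        also have "\<dots> = 1" using Nr unfolding y0_def N_def yv_sum by (simp add: Nr_def N_def)
        finally show ?thesis .
      qed
      ultimately show ?thesis by (auto simp: stochastic_vec_def \<pi>_def)
    qed
    moreover have "stochastic_mat N (P \<sigma>)" for \<sigma> by (simp add: P_def N_def Pm_stoch)
    moreover have "stochastic_mat N Pend"
    proof -
      have "(\<Sum>j<N. Pend $$ (i, j)) = 1" if "i < N" for i
      proof -
        have "(\<Sum>j<N. Pend $$ (i, j)) = (\<Sum>j<Suc (Suc d). if j = 0 then h i else if j = 1 then 1 - h i else 0)"
          by (rule sum.cong) (use that in \<open>auto simp: Pend_def N_def\<close>)
        also have "\<dots> = 1" by (simp add: sum.lessThan_Suc_shift del: sum.lessThan_Suc)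
        finally show ?thesis .
      qed
      moreover have "h i \<le> 1" for i using h[of i] by simp
      ultimately show ?thesis using h by (auto simp: stochastic_mat_def Pend_def)
    qed
    ultimately show ?thesis by (auto simp: pfa_def N_def)
  qed
  have mu: "0 \<le> \<mu> \<and> \<mu> < 1"
  proof -
    have "0 \<le> (\<Sum>i<N. h i)" using h by (intro sum_nonneg) auto
    moreover have "(\<Sum>i<N. h i) < (\<Sum>i<N. 1)" using h by (intro sum_strict_mono) (auto simp: N_def)
    ultimately show ?thesis using Nr by (simp add: \<mu>_def Nr_def field_simps)
  qed
  have prob: "\<exists>c>0. pfa_prob \<pi> P Pend {0} w = \<mu> + c * (\<Sum>i<d. xs w i * \<beta> i)" for w
  proof -
    obtain c where c: "c > 0" "\<forall>i<N. us w $ i = 1 / Nr + c * yv d (xs w) i" and u: "us w \<in> carrier_vec N"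
      using inv by blast
    have "pfa_prob \<pi> P Pend {0} w = row_mult (us w) Pend $ 0"
      by (simp add: pfa_prob_def us_def)
    also have "\<dots> = (\<Sum>i<N. us w $ i * h i)"
      using u by (simp add: row_mult_def Pend_def N_def)
    also have "\<dots> = (\<Sum>i<N. (1 / Nr) * h i + c * (yv d (xs w) i * h i))"
      by (rule sum.cong) (use c in \<open>auto simp: algebra_simps\<close>)
    also have "\<dots> = \<mu> + c * (\<Sum>i<N. yv d (xs w) i * h i)"
      by (simp add: \<mu>_def sum.distrib sum_distrib_left del: sum.lessThan_Suc)
    also have "(\<Sum>i<N. yv d (xs w) i * h i) = \<delta> * (\<Sum>i<d. xs w i * \<beta> i)"
    proof -
      have "(\<Sum>i<d. yv d (xs w) i * h i) = (\<Sum>i<d. (1/2) * xs w i + \<delta> * (xs w i * \<beta> i))"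
        by (rule sum.cong) (auto simp: yv_def h_def algebra_simps)
      then show ?thesis unfolding N_def sumN
        by (simp add: yv_def h_def sum.distrib sum_distrib_left sum_negf sum_divide_distrib[symmetric])
    qed
    finally show ?thesis using c dl by (intro exI[of _ "c * \<delta>"]) (auto simp: algebra_simps)
  qed
  have "(pfa_prob \<pi> P Pend {0} w > \<mu>) \<longleftrightarrow> (\<Sum>i<d. xs w i * \<beta> i) > 0" for w
  proof -
    obtain c where "c > 0" "pfa_prob \<pi> P Pend {0} w = \<mu> + c * (\<Sum>i<d. xs w i * \<beta> i)"
      using prob by blast
    then show ?thesis by (simp add: zero_less_mult_iff)
  qed
  then show ?thesis using pfa mu unfolding N_def xs_def by blast
qed



definition enc :: "nat \<Rightarrow> complex mat \<Rightarrow> nat \<Rightarrow> real" where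
  "enc n M k = (if k < n^2 then Re (M $$ (k div n, k mod n))
                else Im (M $$ ((k - n^2) div n, (k - n^2) mod n)))"

definition dec :: "nat \<Rightarrow> (nat \<Rightarrow> real) \<Rightarrow> complex mat" where
  "dec n x = mat n n (\<lambda>(i,j). Complex (x (i*n+j)) (x (n^2 + i*n+j)))"

definition unitv :: "nat \<Rightarrow> nat \<Rightarrow> real" where
  "unitv k = (\<lambda>j. if j = k then 1 else 0)"

definition trunc :: "nat \<Rightarrow> (nat \<Rightarrow> real) \<Rightarrow> nat \<Rightarrow> real" where
  "trunc m x = (\<lambda>k. if k < m then x k else 0)"

lemma idx_lt: assumes "i < n" "j < (n::nat)" shows "i*n+j < n^2"
proof -
  have "i*n + j < i*n + n" using assms by simp
  also have "\<dots> = Suc i * n" by simp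
  also have "\<dots> \<le> n * n" using assms by (intro mult_le_mono1) simp
  finally show ?thesis by (simp add: power2_eq_square)
qed

lemma dec_carrier[simp]: "dec n x \<in> carrier_mat n n"
  by (simp add: dec_def)

lemma dec_lin: "dec n (\<lambda>k. f k + r * g k) = dec n f + complex_of_real r \<cdot>\<^sub>m dec n g"
  by (rule eq_matI) (auto simp: dec_def complex_eq_iff)

lemma dec_zero: "dec n (\<lambda>k. 0) = 0\<^sub>m n n"
  by (rule eq_matI) (auto simp: dec_def complex_eq_iff)

lemma dec_cong: assumes "\<And>k. k < 2 * n^2 \<Longrightarrow> x k = y k" shows "dec n x = dec n y"
proof (rule eq_matI)
  fix i j assume "i < dim_row (dec n y)" "j < dim_col (dec n y)"
  then have ij: "i < n" "j < n" by (auto simp: dec_def)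
  have "i*n+j < n^2" using idx_lt[OF ij] .
  then show "dec n x $$ (i, j) = dec n y $$ (i, j)" using ij assms by (auto simp: dec_def)
qed (auto simp: dec_def)

lemma expand:
  fixes F :: "complex mat \<Rightarrow> real"
  assumes add: "\<And>A B. A \<in> carrier_mat n n \<Longrightarrow> B \<in> carrier_mat n n \<Longrightarrow> F (A + B) = F A + F B"
    and hom: "\<And>A c. A \<in> carrier_mat n n \<Longrightarrow> F (complex_of_real c \<cdot>\<^sub>m A) = c * F A"
  shows "F (dec n x) = (\<Sum>k<2 * n^2. x k * F (dec n (unitv k)))"
proof -
  have "F (dec n (trunc m x)) = (\<Sum>k<m. x k * F (dec n (unitv k)))" for m
  proof (induction m)
    case 0
    have "F (0\<^sub>m n n) = F (complex_of_real 0 \<cdot>\<^sub>m 0\<^sub>m n n)" by simp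
    also have "\<dots> = 0" using hom[of "0\<^sub>m n n" 0] by simp
    finally show ?case by (simp add: trunc_def dec_zero)
  next
    case (Suc m)
    have "trunc (Suc m) x = (\<lambda>k. trunc m x k + x m * unitv m k)"
      by (rule ext) (auto simp: trunc_def unitv_def less_Suc_eq)
    then have "dec n (trunc (Suc m) x) = dec n (trunc m x) + complex_of_real (x m) \<cdot>\<^sub>m dec n (unitv m)"
      by (simp add: dec_lin)
    then have "F (dec n (trunc (Suc m) x)) = F (dec n (trunc m x)) + x m * F (dec n (unitv m))"
      using add hom by simp
    then show ?case using Suc by simp
  qed
  moreover have "dec n (trunc (2 * n^2) x) = dec n x"
    by (rule dec_cong) (simp add: trunc_def)
  ultimately show ?thesis by metis
qed

lemma enc_idx: fixes k n :: nat assumes "k < 2 * n^2"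
  shows "k < n^2 \<Longrightarrow> k div n < n \<and> k mod n < n"
    and "\<not> k < n^2 \<Longrightarrow> (k - n^2) div n < n \<and> (k - n^2) mod n < n"
proof -
  have n: "n > 0" using assms by (cases n) auto
  show "k < n^2 \<Longrightarrow> k div n < n \<and> k mod n < n"
    using n by (auto simp: power2_eq_square less_mult_imp_div_less)
  show "\<not> k < n^2 \<Longrightarrow> (k - n^2) div n < n \<and> (k - n^2) mod n < n"
  proof -
    assume "\<not> k < n^2"
    then have "k - n^2 < n * n" using assms by (simp add: power2_eq_square)
    then show ?thesis using n by (auto simp: less_mult_imp_div_less)
  qed
qed

lemma enc_add: assumes "A \<in> carrier_mat n n" "B \<in> carrier_mat n n" "k < 2 * n^2"
  shows "enc n (A + B) k = enc n A k + enc n B k"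
  using assms enc_idx[OF assms(3)] by (auto simp: enc_def)

lemma enc_smult: assumes "A \<in> carrier_mat n n" "k < 2 * n^2"
  shows "enc n (complex_of_real c \<cdot>\<^sub>m A) k = c * enc n A k"
  using assms enc_idx[OF assms(2)] by (auto simp: enc_def)

lemma dec_enc: assumes "A \<in> carrier_mat n n" shows "dec n (enc n A) = A"
proof (rule eq_matI)
  fix i j assume "i < dim_row A" "j < dim_col A"
  then have ij: "i < n" "j < n" using assms by auto
  have l: "i*n+j < n^2" using idx_lt[OF ij] .
  have d: "(i*n+j) div n = i" "(i*n+j) mod n = j" using ij by auto
  have e: "n^2 + i*n+j - n^2 = i*n+j" by simp
  show "dec n (enc n A) $$ (i, j) = A $$ (i, j)"
    using ij l d by (simp add: dec_def enc_def e complex_eq_iff)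
qed (use assms in \<open>auto simp: dec_def\<close>)

lemma mtrace_add: "A \<in> carrier_mat n n \<Longrightarrow> B \<in> carrier_mat n n \<Longrightarrow> mtrace (A + B) = mtrace A + mtrace B"
  by (auto simp: mtrace_def sum.distrib)

lemma mtrace_smult: "A \<in> carrier_mat n n \<Longrightarrow> mtrace (c \<cdot>\<^sub>m A) = c * mtrace A"
  by (auto simp: mtrace_def sum_distrib_left)

lemma state_inv:
  assumes "\<rho>0 \<in> carrier_mat n n" "mtrace \<rho>0 = 1" "\<forall>\<sigma>. cptp n (E \<sigma>)"
  shows "gqfa_state \<rho>0 E w \<in> carrier_mat n n \<and> mtrace (gqfa_state \<rho>0 E w) = 1"
proof (induction w rule: rev_induct)
  case Nil then show ?case using assms by (simp add: gqfa_state_def)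
next
  case (snoc \<sigma> w)
  have "gqfa_state \<rho>0 E (w @ [\<sigma>]) = E \<sigma> (gqfa_state \<rho>0 E w)" by (simp add: gqfa_state_def)
  then show ?case using snoc assms(3)
    by (auto simp: cptp_def linear_map_on_def trace_preserving_def)
qed

theorem corollary3p3:
  fixes n :: nat
    and \<rho>0 :: "complex mat" and E :: "'a::finite \<Rightarrow> complex mat \<Rightarrow> complex mat"
    and Pacc :: "complex mat" and lam :: real
  assumes "n \<ge> 1"
    and "gqfa n \<rho>0 E Pacc"
    and "0 \<le> lam" and "lam < 1"
  shows "\<exists>m \<pi> (P :: 'a \<Rightarrow> real mat) Pend F \<mu>.
           pfa m \<pi> P Pend F \<and> m \<le> 2 * n ^ 2 + 6 \<and> 0 \<le> \<mu> \<and> \<mu> < 1 \<and>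
           pfa_lang \<pi> P Pend F \<mu> = gqfa_lang \<rho>0 E Pacc lam"
proof -
  define d where "d = 2 * n^2"
  have r0: "\<rho>0 \<in> carrier_mat n n" "mtrace \<rho>0 = 1"
    using assms(2) by (auto simp: gqfa_def density_op_def psd_def)
  have cp: "\<forall>\<sigma>. cptp n (E \<sigma>)" using assms(2) by (simp add: gqfa_def)
  have Pc: "Pacc \<in> carrier_mat n n" using assms(2) by (simp add: gqfa_def orth_projector_def)
  have lin: "\<And>A. A \<in> carrier_mat n n \<Longrightarrow> E \<sigma> A \<in> carrier_mat n n"
    "\<And>A B. A \<in> carrier_mat n n \<Longrightarrow> B \<in> carrier_mat n n \<Longrightarrow> E \<sigma> (A + B) = E \<sigma> A + E \<sigma> B"
    "\<And>A c. A \<in> carrier_mat n n \<Longrightarrow> E \<sigma> (c \<cdot>\<^sub>m A) = c \<cdot>\<^sub>m E \<sigma> A" for \<sigma>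
    using cp by (auto simp: cptp_def linear_map_on_def)
  define A where "A = (\<lambda>\<sigma> k j. enc n (E \<sigma> (dec n (unitv k))) j)"
  define \<phi> where "\<phi> = (\<lambda>M. Re (mtrace (Pacc * M)) - lam * Re (mtrace M))"
  define \<beta> where "\<beta> = (\<lambda>k. \<phi> (dec n (unitv k)))"
  define x0 where "x0 = enc n \<rho>0"
  define xs where "xs = (\<lambda>w. foldl (\<lambda>x \<sigma>. stp (A \<sigma>) d x) x0 w)"
  have stepE: "enc n (E \<sigma> M) j = (\<Sum>k<d. enc n M k * A \<sigma> k j)"
    if M: "M \<in> carrier_mat n n" and j: "j < d" for \<sigma> M j
  proof -
    let ?F = "\<lambda>X. enc n (E \<sigma> X) j"
    have "?F (dec n (enc n M)) = (\<Sum>k<2 * n^2. enc n M k * ?F (dec n (unitv k)))"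
    proof (rule expand)
      fix X Y :: "complex mat" assume "X \<in> carrier_mat n n" "Y \<in> carrier_mat n n"
      then show "?F (X + Y) = ?F X + ?F Y" using lin j by (simp add: enc_add d_def)
    next
      fix X :: "complex mat" and c :: real assume "X \<in> carrier_mat n n"
      then show "?F (complex_of_real c \<cdot>\<^sub>m X) = c * ?F X" using lin j by (simp add: enc_smult d_def)
    qed
    then show ?thesis using M by (simp add: dec_enc A_def d_def)
  qed
  have phiE: "\<phi> M = (\<Sum>k<d. enc n M k * \<beta> k)" if M: "M \<in> carrier_mat n n" for M
  proof -
    have "\<phi> (dec n (enc n M)) = (\<Sum>k<2 * n^2. enc n M k * \<phi> (dec n (unitv k)))"
    proof (rule expand)
      fix X Y :: "complex mat" assume XY: "X \<in> carrier_mat n n" "Y \<in> carrier_mat n n"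
      then have "Pacc * (X + Y) = Pacc * X + Pacc * Y" using Pc by (simp add: mult_add_distrib_mat)
      moreover have "mtrace (Pacc * X + Pacc * Y) = mtrace (Pacc * X) + mtrace (Pacc * Y)"
        by (rule mtrace_add) (use XY Pc in auto)
      ultimately show "\<phi> (X + Y) = \<phi> X + \<phi> Y" using XY Pc
        by (simp add: \<phi>_def mtrace_add algebra_simps)
    next
      fix X :: "complex mat" and c :: real assume X: "X \<in> carrier_mat n n"
      then have "Pacc * (complex_of_real c \<cdot>\<^sub>m X) = complex_of_real c \<cdot>\<^sub>m (Pacc * X)"
        using Pc by (simp add: mult_smult_distrib)
      moreover have "mtrace (complex_of_real c \<cdot>\<^sub>m (Pacc * X)) = complex_of_real c * mtrace (Pacc * X)"
        by (rule mtrace_smult) (use X Pc in auto)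
      ultimately show "\<phi> (complex_of_real c \<cdot>\<^sub>m X) = c * \<phi> X" using X Pc
        by (simp add: \<phi>_def mtrace_smult algebra_simps)
    qed
    then show ?thesis using M by (simp add: dec_enc \<beta>_def d_def)
  qed
  have xs_eq: "\<forall>j<d. xs w j = enc n (gqfa_state \<rho>0 E w) j" for w
  proof (induction w rule: rev_induct)
    case Nil then show ?case by (simp add: xs_def x0_def gqfa_state_def)
  next
    case (snoc \<sigma> w)
    have st: "gqfa_state \<rho>0 E (w @ [\<sigma>]) = E \<sigma> (gqfa_state \<rho>0 E w)" by (simp add: gqfa_state_def)
    have c: "gqfa_state \<rho>0 E w \<in> carrier_mat n n" using state_inv[OF r0 cp] by blast
    show ?case
    proof (intro allI impI)
      fix j assume j: "j < d"
      have "xs (w @ [\<sigma>]) j = (\<Sum>i<d. xs w i * A \<sigma> i j)" by (simp add: xs_def stp_def)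
      also have "\<dots> = (\<Sum>i<d. enc n (gqfa_state \<rho>0 E w) i * A \<sigma> i j)"
        using snoc by (intro sum.cong) auto
      also have "\<dots> = enc n (gqfa_state \<rho>0 E (w @ [\<sigma>])) j" using stepE[OF c j] st by simp
      finally show "xs (w @ [\<sigma>]) j = enc n (gqfa_state \<rho>0 E (w @ [\<sigma>])) j" .
    qed
  qed
  have g: "(\<Sum>i<d. xs w i * \<beta> i) = gqfa_prob \<rho>0 E Pacc w - lam" for w
  proof -
    have c: "gqfa_state \<rho>0 E w \<in> carrier_mat n n" "mtrace (gqfa_state \<rho>0 E w) = 1"
      using state_inv[OF r0 cp] by blast+
    have "(\<Sum>i<d. xs w i * \<beta> i) = (\<Sum>i<d. enc n (gqfa_state \<rho>0 E w) i * \<beta> i)"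
      using xs_eq by (intro sum.cong) auto
    also have "\<dots> = \<phi> (gqfa_state \<rho>0 E w)" using phiE[OF c(1)] by simp
    also have "\<dots> = gqfa_prob \<rho>0 E Pacc w - lam" using c(2) by (simp add: \<phi>_def gqfa_prob_def)
    finally show ?thesis .
  qed
  obtain \<pi> and P :: "'a \<Rightarrow> real mat" and Pend F \<mu> where
    T: "pfa (Suc (Suc d)) \<pi> P Pend F" "0 \<le> \<mu>" "\<mu> < 1"
       "\<And>w. (pfa_prob \<pi> P Pend F w > \<mu>) \<longleftrightarrow> (\<Sum>i<d. xs w i * \<beta> i) > 0"
    using turakainen[of d A x0 \<beta>] unfolding xs_def by blast
  have "pfa_lang \<pi> P Pend F \<mu> = gqfa_lang \<rho>0 E Pacc lam"
    using T(4) g by (auto simp: pfa_lang_def gqfa_lang_def)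
  moreover have "Suc (Suc d) \<le> 2 * n ^ 2 + 6" by (simp add: d_def)
  ultimately show ?thesis using T by blast
qed

end
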